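(* Let $a,b$ be positive integers and $r=[2a,2b,-2b,-2a]$. Then all zeros of $\Delta_{K(r)}(t)$ are real if and only if $a\ge 4b$.
   Context: For a finite sequence $r=[2a_1,2a_2,\dots,2a_n]$ of nonzero even integers, $K(r)$ denotes the 2-bridge knot or link whose associated rational number has the even continued fraction expansion $1/(2a_1-1/(2a_2-\cdots-1/(2a_n)))$ ($K(r)$ is a knot if $n$ is even and a 2-component link if $n$ is odd). Let $M(r)$ be the $n\times n$ integer matrix whose $(k,k)$-entry is $a_k$ ($1\le k\le n$), whose $(k,k+1)$-entry is $1$ ($1\le k\le n-1$), and whose other entries are $0$; it is a Seifert matrix of $K(r)$, and $\Delta_{K(r)}(t)=\det(tM(r)-M(r)^T)$ is the (reduced) Alexander polynomial of $K(r)$ (well defined up to sign). *)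

theory Defs
  imports "Jordan_Normal_Form.Determinant" "HOL-Computational_Algebra.Polynomial" Complex_Main
begin

text \<open>For r = [2a_1,...,2a_n] (a list of nonzero even integers), the Seifert matrix M(r):
  (k,k)-entry a_k, (k,k+1)-entry 1, all others 0 (0-based indices here).\<close>
definition seifert_matrix :: "int list \<Rightarrow> int mat" where
  "seifert_matrix r = mat (length r) (length r)
     (\<lambda>(i,j). if i = j then (r ! i) div 2 else if j = i + 1 then 1 else 0)"

text \<open>Alexander polynomial det(t M - M^T) as an integer polynomial in t.\<close>
definition alexander_poly :: "int list \<Rightarrow> int poly" where
  "alexander_poly r = (let M = seifert_matrix r in
     det (mat (dim_row M) (dim_col M) (\<lambda>(i,j). [: - (M $$ (j,i)), M $$ (i,j) :])))"

end

theory Submission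
  imports Defs "HOL-Computational_Algebra.Fundamental_Theorem_Algebra"
begin


lemma det_row0:
  assumes "A \<in> carrier_mat (Suc n) (Suc n)"
  shows "det A = (\<Sum>j<Suc n. A $$ (0,j) * ((-1)^j * det (mat_delete A 0 j)))"
  using laplace_expansion_row[OF assms, of 0] by (simp add: cofactor_def)

lemma mat_delete_mat: "j < Suc n \<Longrightarrow> mat_delete (mat (Suc n) (Suc n) f) 0 j = mat n n (\<lambda>(i',j'). f (Suc i', if j' < j then j' else Suc j'))"
  by (rule eq_matI) (auto simp: mat_delete_def)

lemma det_mat_Suc:
  "det (mat (Suc n) (Suc n) f) = (\<Sum>j<Suc n. f (0,j) * ((-1)^j * det (mat n n (\<lambda>(i',j'). f (Suc i', if j' < j then j' else Suc j')))))"
  by (subst det_row0[of _ n]) (auto simp: mat_delete_mat intro!: sum.cong)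




lemma alex_int: "poly (alexander_poly [2*a, 2*b, -2*b, -2*a]) x = (a*b)^2*(x-1)^4 + (2*a*b-a^2)*(x-1)^2*x + x^2"
proof -
  have h: "\<And>c::int. (- (2*c)) div 2 = - c" "\<And>c::int. (- (c*2)) div 2 = - c" by simp_all
  show ?thesis
  unfolding alexander_poly_def seifert_matrix_def Let_def
  apply (simp add: numeral_eq_Suc det_mat_Suc h)
  apply (simp add: algebra_simps power2_eq_square power4_eq_xxxx)
  done
qed

lemma alex_poly:
  fixes a b c k :: int
  assumes c_def: "c = a*b" and k_def: "k = 2*a*b - a^2"
  shows "alexander_poly [2*a, 2*b, -2*b, -2*a] = [: c^2, k - 4*c^2, 6*c^2 - 2*k + 1, k - 4*c^2, c^2 :]"
proof -
  have "poly (alexander_poly [2*a, 2*b, -2*b, -2*a]) = poly [: c^2, k - 4*c^2, 6*c^2 - 2*k + 1, k - 4*c^2, c^2 :]"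
    unfolding alex_int by (rule ext, simp add: c_def k_def algebra_simps power2_eq_square power4_eq_xxxx)
  then show ?thesis by (simp add: poly_eq_poly_eq_iff)
qed

lemma real_of_sq:
  fixes w :: complex
  assumes "w^2 = complex_of_real r" "r \<ge> 0"
  shows "w \<in> \<real>"
proof -
  have s: "complex_of_real (sqrt r) * of_real (sqrt r) = of_real r" using assms
    by (simp flip: of_real_mult)
  have "(w - of_real (sqrt r)) * (w + of_real (sqrt r)) = w*w - of_real (sqrt r) * of_real (sqrt r)"
    by (simp add: algebra_simps)
  also have "\<dots> = 0" using assms s by (simp add: power2_eq_square)
  finally have "w = of_real (sqrt r) \<or> w = - of_real (sqrt r)"
    by (auto simp: add_eq_0_iff2)
  then show ?thesis by auto
qed



lemma alex_complex:
  fixes a b :: int and z :: complex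
  shows "poly (map_poly of_int (alexander_poly [2*a, 2*b, -2*b, -2*a])) z =
     of_int (a*b)^2*(z-1)^4 + of_int (2*a*b - a^2)*(z-1)^2*z + z^2"
  unfolding alex_poly[OF refl refl]
  by (simp add: map_poly_pCons algebra_simps power2_eq_square power4_eq_xxxx)

lemma alex_degree:
  fixes a b :: int
  assumes "a*b \<noteq> 0"
  shows "degree (map_poly (of_int :: int \<Rightarrow> complex) (alexander_poly [2*a, 2*b, -2*b, -2*a])) = 4"
  unfolding alex_poly[OF refl refl] using assms by (simp add: map_poly_pCons)



lemma real_nonroot:
  fixes c k x :: real
  assumes "c \<noteq> 0" "4*c^2 - k^2 > 0"
  shows "c^2*(x-1)^4 + k*(x-1)^2*x + x^2 \<noteq> 0"
proof
  assume g: "c^2*(x-1)^4 + k*(x-1)^2*x + x^2 = 0"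
  define X where "X = (x-1)^2"
  have "4*c^2*(c^2*(x-1)^4 + k*(x-1)^2*x + x^2) = (2*c^2*X + k*x)^2 + (4*c^2-k^2)*x^2"
    unfolding X_def by (simp add: algebra_simps power2_eq_square power4_eq_xxxx)
  with g have e: "(2*c^2*X + k*x)^2 + (4*c^2-k^2)*x^2 = 0" by simp
  have "(4*c^2-k^2)*x^2 \<ge> 0" using assms by simp
  moreover have "(2*c^2*X + k*x)^2 \<ge> 0" by simp
  ultimately have "(4*c^2-k^2)*x^2 = 0" "(2*c^2*X + k*x)^2 = 0" using e by linarith+
  then have "x = 0" "2*c^2*X + k*x = 0" using assms by auto
  then show False using assms unfolding X_def by simp
qed

lemma factor_id:
  fixes z C K U1 U2 :: complex
  assumes "C \<noteq> 0" "U1 + U2 = - K / C^2" "U1 * U2 = 1 / C^2"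
  shows "C^2*X^2 + K*X*z + z^2 = C^2 * (X - U1*z) * (X - U2*z)"
proof -
  have "C^2 * (X - U1*z) * (X - U2*z) = C^2*X^2 - C^2*(U1+U2)*X*z + C^2*(U1*U2)*z^2"
    by (simp add: algebra_simps power2_eq_square)
  also have "\<dots> = C^2*X^2 + K*X*z + z^2" using assms by (simp add: field_simps)
  finally show ?thesis by simp
qed

lemma quad_real:
  fixes z :: complex and u :: real
  assumes "(z-1)^2 - of_real u * z = 0" "u \<ge> 0"
  shows "z \<in> \<real>"
proof -
  have "(z - of_real (1 + u/2))^2 = (z-1)^2 - of_real u * z + of_real (u + u^2/4)"
    by (simp add: algebra_simps power2_eq_square)
  also have "\<dots> = of_real (u + u^2/4)" using assms by simp
  finally have "z - of_real (1 + u/2) \<in> \<real>" by (rule real_of_sq) (use assms in simp)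
  then have "z - of_real (1 + u/2) + of_real (1 + u/2) \<in> \<real>" by (intro Reals_add) auto
  then show ?thesis by simp
qed


theorem proposition8p3:
  fixes a b :: int
  assumes "a > 0" and "b > 0"
  shows "(\<forall>z::complex. poly (map_poly of_int (alexander_poly [2*a, 2*b, -2*b, -2*a])) z = 0
            \<longrightarrow> z \<in> \<real>) \<longleftrightarrow> a \<ge> 4 * b"
proof -
  define ar br where "ar = real_of_int a" "br = real_of_int b"
  define c k where "c = ar*br" "k = 2*ar*br - ar^2"
  have ar: "ar > 0" "br > 0" using assms ar_br_def by auto
  have cpos: "c > 0" using ar c_k_def by simp
  have ev: "poly (map_poly of_int (alexander_poly [2*a, 2*b, -2*b, -2*a])) z =
      of_real c^2*(z-1)^4 + of_real k*(z-1)^2*z + z^2" for z :: complex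
  proof -
    have 1: "complex_of_int (a*b) = of_real c" by (simp add: c_k_def ar_br_def)
    have 2: "complex_of_int (2*a*b - a^2) = of_real k" by (simp add: c_k_def ar_br_def)
    show ?thesis unfolding alex_complex 1 2 ..
  qed
  have disc: "k^2 - 4*c^2 = ar^3*(ar - 4*br)"
    unfolding c_k_def by (simp add: algebra_simps power2_eq_square power3_eq_cube)
  show ?thesis
  proof
    assume H: "\<forall>z::complex. poly (map_poly of_int (alexander_poly [2*a, 2*b, -2*b, -2*a])) z = 0
            \<longrightarrow> z \<in> \<real>"
    show "a \<ge> 4*b"
    proof (rule ccontr)
      assume "\<not> a \<ge> 4*b"
      then have "ar < 4*br" using ar_br_def by simp
      then have "ar - 4*br < 0" by linarith
      moreover have "ar^3 > 0" using ar by simp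
      ultimately have "ar^3*(ar - 4*br) < 0" by (rule mult_pos_neg[rotated])
      then have d: "4*c^2 - k^2 > 0" using disc by linarith
      have "degree (map_poly (of_int :: int \<Rightarrow> complex) (alexander_poly [2*a, 2*b, -2*b, -2*a])) = 4"
        by (rule alex_degree) (use assms in simp)
      then have "\<not> constant (poly (map_poly (of_int :: int \<Rightarrow> complex) (alexander_poly [2*a, 2*b, -2*b, -2*a])))"
        by (simp add: constant_degree)
      then obtain z :: complex where z: "poly (map_poly of_int (alexander_poly [2*a, 2*b, -2*b, -2*a])) z = 0"
        using fundamental_theorem_of_algebra by blast
      with H have "z \<in> \<real>" by blast
      then obtain x where x: "z = of_real x" by (auto elim: Reals_cases)
      have "of_real (c^2*(x-1)^4 + k*(x-1)^2*x + x^2) = (0::complex)"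
        using z unfolding ev x by (simp only: of_real_add of_real_mult of_real_power of_real_diff of_real_1)
      then have "c^2*(x-1)^4 + k*(x-1)^2*x + x^2 = 0" by (simp only: of_real_eq_0_iff)
      with real_nonroot[OF _ d] cpos show False by simp
    qed
  next
    assume ab: "a \<ge> 4*b"
    then have "ar \<ge> 4*br" using ar_br_def by simp
    then have "ar - 4*br \<ge> 0" by linarith
    moreover have "ar^3 \<ge> 0" using ar by simp
    ultimately have nn: "ar^3*(ar - 4*br) \<ge> 0" by (rule mult_nonneg_nonneg[rotated])
    define d where "d = sqrt (ar^3*(ar - 4*br))"
    have d0: "d \<ge> 0" unfolding d_def using nn by simp
    have "d^2 = ar^3*(ar - 4*br)" unfolding d_def using nn by (rule real_sqrt_pow2)
    then have d2: "d^2 = k^2 - 4*c^2" using disc by simp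
    have "ar - 2*br > 0" using ar \<open>ar \<ge> 4*br\<close> by linarith
    then have "ar*(ar - 2*br) > 0" using ar by simp
    moreover have "-k = ar*(ar - 2*br)" unfolding c_k_def by (simp add: algebra_simps power2_eq_square)
    ultimately have kneg: "-k > 0" by simp
    have "c^2 \<ge> 0" by simp
    then have "d^2 \<le> (-k)^2" using d2 by (simp only: power2_minus)
    then have dk: "d \<le> -k" by (rule power2_le_imp_le) (use kneg in linarith)
    define u1 u2 where "u1 = (-k + d)/(2*c^2)" "u2 = (-k - d)/(2*c^2)"
    have c2: "2*c^2 > 0" using cpos by simp
    have "-k + d \<ge> 0" "-k - d \<ge> 0" using dk d0 kneg by linarith+
    then have u0: "u1 \<ge> 0" "u2 \<ge> 0" unfolding u1_u2_def using c2 by simp_all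
    have s: "u1 + u2 = -k/c^2" using cpos unfolding u1_u2_def by (simp add: field_simps)
    have pp: "(-k+d)*(-k-d) = 4*c^2" using d2 by (simp add: algebra_simps power2_eq_square)
    have "u1 * u2 = ((-k+d)*(-k-d))/((2*c^2)*(2*c^2))" unfolding u1_u2_def
      by (rule times_divide_times_eq)
    also have "\<dots> = (4*c^2)/((2*c^2)*(2*c^2))" by (simp only: pp)
    also have "\<dots> = 1/c^2" using cpos by (simp add: field_simps power2_eq_square)
    finally have p: "u1 * u2 = 1/c^2" .
    show "\<forall>z::complex. poly (map_poly of_int (alexander_poly [2*a, 2*b, -2*b, -2*a])) z = 0
            \<longrightarrow> z \<in> \<real>"
    proof (intro allI impI)
      fix z :: complex
      assume "poly (map_poly of_int (alexander_poly [2*a, 2*b, -2*b, -2*a])) z = 0"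
      then have "of_real c^2*((z-1)^2)^2 + of_real k*(z-1)^2*z + z^2 = 0"
        unfolding ev by (simp flip: power_mult)
      also have "of_real c^2*((z-1)^2)^2 + of_real k*(z-1)^2*z + z^2
          = of_real c^2 * ((z-1)^2 - of_real u1*z) * ((z-1)^2 - of_real u2*z)"
      proof (rule factor_id)
        show "complex_of_real c \<noteq> 0" using cpos by simp
        show "complex_of_real u1 + complex_of_real u2 = - complex_of_real k / (complex_of_real c)^2"
          using arg_cong[OF s, of complex_of_real] by simp
        show "complex_of_real u1 * complex_of_real u2 = 1 / (complex_of_real c)^2"
          using arg_cong[OF p, of complex_of_real] by simp
      qed
      finally have "(z-1)^2 - of_real u1*z = 0 \<or> (z-1)^2 - of_real u2*z = 0"
        using cpos by simp
      then show "z \<in> \<real>" using quad_real u0 by blast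
    qed
  qed
qed


end
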